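(* Let $c_n$ denote the minimal Colless index among rooted binary trees with $n$ leaves. Then: (1) for every integer $k\geq 0$, $c_{2^k+1}=k$; (2) for every integer $k\geq 1$, $c_{2^k-1}=k-1$; (3) for every integer $k\geq 1$ and every $j\in\{1,\dots,2^{k-1}-1\}$, $c_{2^{k-1}+j}=c_{2^k-j}$.
   Context: A rooted binary tree with $n\geq 2$ leaves is a rooted tree whose root has degree 2 and all other internal nodes have degree 3; for $n=1$ it is a single node. For an internal node $v$ with children $v_1,v_2$, let $\kappa(v_i)$ be the number of leaves descending from $v_i$ ($1$ if a leaf). The Colless index is $\mathcal{C}(T)=\sum_v|\kappa(v_1)-\kappa(v_2)|$ over internal nodes $v$. *)

theory Defs
  imports Main
begin

text \<open>Children are ordered here, but the Colless index and the leaf count are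
  invariant under swapping children, so the minimum is unaffected.\<close>
datatype btree = Leaf | Node btree btree

fun leaves :: "btree \<Rightarrow> nat" where
  "leaves Leaf = 1"
| "leaves (Node l r) = leaves l + leaves r"

fun colless :: "btree \<Rightarrow> nat" where
  "colless Leaf = 0"
| "colless (Node l r) = colless l + colless r +
     (if leaves l \<ge> leaves r then leaves l - leaves r else leaves r - leaves l)"

definition min_colless :: "nat \<Rightarrow> nat" where
  "min_colless n = Min (colless ` {t. leaves t = n})"

end

theory Submission
  imports Defs
begin

fun f :: "nat \<Rightarrow> nat" where
  "f 0 = 0"
| "f (Suc 0) = 0"
| "f (Suc (Suc n)) = f (Suc (Suc n) - Suc (Suc n) div 2) + f (Suc (Suc n) div 2) + Suc (Suc n) mod 2"

lemma f_even: "f (2*x) = 2 * f x"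
proof (cases x)
  case 0 then show ?thesis by simp
next
  case (Suc m)
  then have "2*x = Suc (Suc (2*m))" by simp
  then show ?thesis using Suc by (simp only: f.simps) simp
qed

lemma f_odd: "x \<ge> 1 \<Longrightarrow> f (2*x+1) = f (x+1) + f x + 1"
proof -
  assume "x \<ge> 1"
  then obtain m where m: "x = Suc m" by (cases x) auto
  have "2*x+1 = Suc (Suc (2*m+1))" using m by simp
  then have "f (2*x+1) = f (Suc (Suc (2*m+1)) - Suc (Suc (2*m+1)) div 2) + f (Suc (Suc (2*m+1)) div 2) + Suc (Suc (2*m+1)) mod 2"
    by (simp only: f.simps)
  also have "\<dots> = f (x+1) + f x + 1" using m by simp
  finally show ?thesis .
qed

lemma f_one: "f 1 = 0" by simp

lemma absd: "\<bar>(d::int) - 1\<bar> + \<bar>d\<bar> = \<bar>2*d - 1\<bar>" by arith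

lemma main: "int (f (a+b)) \<le> int (f a) + int (f b) + \<bar>int a - int b\<bar>"
proof (induction "a+b" arbitrary: a b rule: less_induct)
  case less
  show ?case
  proof (cases "a = 0 \<or> b = 0")
    case True then show ?thesis by auto
  next
    case False
    then have a1: "a \<ge> 1" and b1: "b \<ge> 1" by auto
    obtain x \<alpha> where ax: "a = 2*x + \<alpha>" and al: "\<alpha> = a mod 2" and "x = a div 2" by auto
    obtain y \<beta> where byy: "b = 2*y + \<beta>" and be: "\<beta> = b mod 2" and "y = b div 2" by auto
    have "\<alpha> = 0 \<or> \<alpha> = 1" using al by auto
    moreover have "\<beta> = 0 \<or> \<beta> = 1" using be by auto
    ultimately show ?thesis
    proof (elim disjE)
      assume AB: "\<alpha> = 0" "\<beta> = 0"
      then have e: "a = 2*x" "b = 2*y" "a + b = 2*(x+y)" using ax byy by auto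
      have "x + y < a + b" using e a1 by auto
      then have "int (f (x+y)) \<le> int (f x) + int (f y) + \<bar>int x - int y\<bar>" using less[of x y] by simp
      moreover have "f (a+b) = 2 * f (x+y)" using f_even[of "x+y"] e by simp
      moreover have "\<bar>int a - int b\<bar> = 2 * \<bar>int x - int y\<bar>" using e by arith
      ultimately show ?thesis using e f_even by simp
    next
      assume AB: "\<alpha> = 0" "\<beta> = 1"
      then have e: "a = 2*x" "b = 2*y+1" "a + b = 2*(x+y)+1" using ax byy by auto
      have x1: "x \<ge> 1" using e a1 by auto
      have "x + y + 1 < a + b" "x + y < a + b" using e x1 by auto
      then have h1: "int (f (x+(y+1))) \<le> int (f x) + int (f (y+1)) + \<bar>int x - int (y+1)\<bar>"
        and h2: "int (f (x+y)) \<le> int (f x) + int (f y) + \<bar>int x - int y\<bar>"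
        using less[of x "y+1"] less[of x y] by auto
      have o1: "f (a+b) = f (x+y+1) + f (x+y) + 1" using f_odd[of "x+y"] e x1 by simp
      show ?thesis
      proof (cases "y = 0")
        case True
        have "\<bar>int x - 1\<bar> + 1 \<le> \<bar>2 * int x - 1\<bar>" using x1 by arith
        then show ?thesis using h1 True o1 e f_even[of x] by simp
      next
        case False
        then have o2: "f b = f (y+1) + f y + 1" using f_odd[of y] f_odd[of x] e by auto
        have "\<bar>int x - int (y+1)\<bar> + \<bar>int x - int y\<bar> = \<bar>int a - int b\<bar>"
          proof -
            have d: "int a = 2*int x + int \<alpha>" "int b = 2 * int y + int \<beta>" using ax byy by auto
            show ?thesis unfolding d using AB by (simp; arith?)
          qed
        then show ?thesis using h1 h2 o1 o2 e by (simp add: f_even add.assoc)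
      qed
    next
      assume AB: "\<alpha> = 1" "\<beta> = 0"
      then have e: "b = 2*y" "a = 2*x+1" "a + b = 2*(x+y)+1" using ax byy by auto
      have y1: "y \<ge> 1" using e b1 by auto
      have "x + y + 1 < a + b" "x + y < a + b" using e y1 by auto
      then have h1: "int (f ((x+1)+y)) \<le> int (f (x+1)) + int (f y) + \<bar>int (x+1) - int y\<bar>"
        and h2: "int (f (x+y)) \<le> int (f x) + int (f y) + \<bar>int x - int y\<bar>"
        using less[of "x+1" y] less[of x y] by auto
      have o1: "f (a+b) = f (x+y+1) + f (x+y) + 1" using f_odd[of "x+y"] e y1 by simp
      show ?thesis
      proof (cases "x = 0")
        case True
        have "\<bar>1 - int y\<bar> + 1 \<le> \<bar>1 - 2 * int y\<bar>" using y1 by arith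
        then show ?thesis using h1 True o1 e f_even[of y] by simp
      next
        case False
        then have o2: "f a = f (x+1) + f x + 1" using f_odd[of y] f_odd[of x] e by auto
        have "\<bar>int (x+1) - int y\<bar> + \<bar>int x - int y\<bar> = \<bar>int a - int b\<bar>"
          proof -
            have d: "int a = 2*int x + int \<alpha>" "int b = 2 * int y + int \<beta>" using ax byy by auto
            show ?thesis unfolding d using AB by (simp; arith?)
          qed
        then show ?thesis using h1 h2 o1 o2 e by (simp add: f_even add.assoc add.commute)
      qed
    next
      assume AB: "\<alpha> = 1" "\<beta> = 1"
      then have e: "a = 2*x+1" "b = 2*y+1" "a + b = 2*(x+y+1)" using ax byy by auto
      have "x + y + 1 < a + b" using e by auto
      then have h1: "int (f ((x+1)+y)) \<le> int (f (x+1)) + int (f y) + \<bar>int (x+1) - int y\<bar>"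
        and h2: "int (f (x+(y+1))) \<le> int (f x) + int (f (y+1)) + \<bar>int x - int (y+1)\<bar>"
        using less[of "x+1" y] less[of x "y+1"] by auto
      have ev: "f (a+b) = 2 * f (x+y+1)" using f_even[of "x+y+1"] e by simp
      have fa: "int (f a) \<ge> int (f (x+1)) + int (f x) + 1 - (if x = 0 then 1 else 0)"
        using f_odd[of x] e by (cases "x = 0") auto
      have fb: "int (f b) \<ge> int (f (y+1)) + int (f y) + 1 - (if y = 0 then 1 else 0)"
        using f_odd[of y] e by (cases "y = 0") auto
      have ab: "\<bar>int a - int b\<bar> = 2 * \<bar>int x - int y\<bar>" using e by arith
      have "x + y + 1 = (x+1)+y" "x+y+1 = x + (y+1)" by auto
      then have hh: "2 * int (f (x+y+1)) \<le> int (f (x+1)) + int (f y) + \<bar>int (x+1) - int y\<bar>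
          + int (f x) + int (f (y+1)) + \<bar>int x - int (y+1)\<bar>" using h1 h2 by simp
      show ?thesis
      proof (cases "x = 0 \<or> y = 0")
        case False
        have "\<bar>1 + int x - int y\<bar> + \<bar>int x - (1 + int y)\<bar> \<le> 2*\<bar>int x - int y\<bar> + 2" by arith
        then show ?thesis using hh fa fb ab ev False by simp
      next
        case True
        then show ?thesis
        proof
          assume x0: "x = 0"
          have "f a = 0" using e x0 by simp
          have "y + 1 < a + b" using e x0 by auto
          then have "int (f (y+1)) \<le> int (f y) + int (f 1) + \<bar>int y - 1\<bar>" using less[of y 1] by auto
          then show ?thesis using ev fb ab x0 \<open>f a = 0\<close> by (cases "y = 0") auto
        next
          assume y0: "y = 0"
          have "f b = 0" using e y0 by simp
          have "x + 1 < a + b" using e y0 by auto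
          then have "int (f (x+1)) \<le> int (f x) + int (f 1) + \<bar>int x - 1\<bar>" using less[of x 1] by auto
          then show ?thesis using ev fa ab y0 \<open>f b = 0\<close> by (cases "x = 0") auto
        qed
      qed
    qed
  qed
qed


lemma leaves_pos: "leaves t \<ge> 1"
  by (induction t) auto

lemma lower: "f (leaves t) \<le> colless t"
proof (induction t)
  case Leaf then show ?case by simp
next
  case (Node l r)
  have "int (f (leaves l + leaves r)) \<le> int (f (leaves l)) + int (f (leaves r)) + \<bar>int (leaves l) - int (leaves r)\<bar>"
    by (rule main)
  then show ?case using Node by (auto split: if_splits)
qed

fun bal :: "nat \<Rightarrow> btree" where
  "bal n = (if n \<le> 1 then Leaf else Node (bal (n - n div 2)) (bal (n div 2)))"

declare bal.simps[simp del]

lemma bal_prop: "n \<ge> 1 \<Longrightarrow> leaves (bal n) = n \<and> colless (bal n) = f n"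
proof (induction n rule: less_induct)
  case (less n)
  show ?case
  proof (cases "n \<le> 1")
    case True
    then have "n = 1" using less.prems by auto
    then show ?thesis by (simp add: bal.simps)
  next
    case False
    then obtain m where m: "n = Suc (Suc m)" by (cases n; cases "n - 1") auto
    have fn: "f n = f (n - n div 2) + f (n div 2) + n mod 2" using m by (simp only: f.simps)
    have ih1: "leaves (bal (n - n div 2)) = n - n div 2 \<and> colless (bal (n - n div 2)) = f (n - n div 2)"
      using less.IH[of "n - n div 2"] False by auto
    have ih2: "leaves (bal (n div 2)) = n div 2 \<and> colless (bal (n div 2)) = f (n div 2)"
      using less.IH[of "n div 2"] False by auto
    have b: "bal n = Node (bal (n - n div 2)) (bal (n div 2))" using False by (simp add: bal.simps)
    show ?thesis unfolding b using ih1 ih2 fn by auto presburger?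
  qed
qed

lemma fin_le: "finite {t. leaves t \<le> n}"
proof (induction n)
  case 0
  have "{t. leaves t \<le> 0} = {}" using leaves_pos by (auto simp: Suc_le_eq)
  then show ?case by (metis finite.emptyI)
next
  case (Suc n)
  have "{t. leaves t \<le> Suc n} \<subseteq> insert Leaf ((\<lambda>(l,r). Node l r) ` ({t. leaves t \<le> n} \<times> {t. leaves t \<le> n}))"
  proof
    fix t assume t: "t \<in> {t. leaves t \<le> Suc n}"
    show "t \<in> insert Leaf ((\<lambda>(l,r). Node l r) ` ({t. leaves t \<le> n} \<times> {t. leaves t \<le> n}))"
    proof (cases t)
      case Leaf then show ?thesis by simp
    next
      case (Node l r)
      then show ?thesis using t leaves_pos[of l] leaves_pos[of r] by force
    qed
  qed
  moreover have "finite (insert Leaf ((\<lambda>(l,r). Node l r) ` ({t. leaves t \<le> n} \<times> {t. leaves t \<le> n})))"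
    using Suc by auto
  ultimately show ?case by (rule finite_subset)
qed

lemma min_colless_f: "n \<ge> 1 \<Longrightarrow> min_colless n = f n"
  unfolding min_colless_def
proof (rule Min_eqI)
  show "finite (colless ` {t. leaves t = n})"
    proof (rule finite_imageI)
    show "finite {t. leaves t = n}" using fin_le[of n] by (rule finite_subset[rotated]) auto
  qed
  show "\<And>y. y \<in> colless ` {t. leaves t = n} \<Longrightarrow> f n \<le> y" using lower by auto
  assume "n \<ge> 1"
  then show "f n \<in> colless ` {t. leaves t = n}" using bal_prop[of n] by force
qed

lemma f_pow2: "f (2^k) = 0"
  by (induction k) (auto simp: f_even)

lemma f1: "f (2^k + 1) = k"
proof (induction k)
  case 0 then show ?case by (simp add: numeral_2_eq_2)
next
  case (Suc k)
  have "f (2^Suc k + 1) = f (2 * 2^k + 1)" by simp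
  also have "\<dots> = f (2^k+1) + f (2^k) + 1" by (rule f_odd) simp
  finally show ?case using Suc f_pow2 by simp
qed

lemma f2: "k \<ge> 1 \<Longrightarrow> f (2^k - 1) = k - 1"
proof (induction k rule: dec_induct)
  case base then show ?case by simp
next
  case (step k)
  have p: "(2::nat)^k \<ge> 2" proof -
    have "(2::nat)^1 \<le> 2^k" using step(1) by (rule power_increasing) simp
    then show ?thesis by simp
  qed
  have "2^Suc k - 1 = 2 * (2^k - 1) + (1::nat)" using p by simp
  then have "f (2^Suc k - 1) = f (2 * (2^k - 1) + 1)" by simp
  also have "\<dots> = f (2^k - 1 + 1) + f (2^k - 1) + 1" by (rule f_odd) (use p in simp)
  also have "2^k - 1 + 1 = (2::nat)^k" using p by simp
  finally show ?case using step f_pow2 by simp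
qed

lemma f3: "\<forall>j. 1 \<le> j \<and> j \<le> 2^k - 1 \<longrightarrow> f (2^k + j) = f (2^Suc k - j)"
proof (induction k)
  case 0 then show ?case by simp
next
  case (Suc k)
  show ?case
  proof (intro allI impI)
    fix j assume j: "1 \<le> j \<and> j \<le> 2 ^ Suc k - (1::nat)"
    obtain i where "j = 2*i \<or> j = 2*i+1" by (metis oddE evenE)
    then show "f (2 ^ Suc k + j) = f (2 ^ Suc (Suc k) - j)"
    proof
      assume ji: "j = 2*i"
      have i: "1 \<le> i \<and> i \<le> 2^k - 1" using j ji by auto
      have "f (2 ^ Suc k + j) = f (2 * (2^k + i))" using ji by simp
      also have "\<dots> = 2 * f (2^k+i)" by (rule f_even)
      also have "\<dots> = 2 * f (2^Suc k - i)" using Suc i by simp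
      also have "\<dots> = f (2 * (2^Suc k - i))" by (rule f_even[symmetric])
      also have "2 * (2^Suc k - i) = 2 ^ Suc (Suc k) - j" using ji by simp
      finally show ?thesis .
    next
      assume ji: "j = 2*i+1"
      have i: "i \<le> 2^k - 1" using j ji by auto
      have pk: "(2::nat)^k \<ge> 1" by simp
      define P where "P = (2::nat)^k"
      have P: "P \<ge> 1" "(2::nat)^Suc k = 2*P" "(2::nat)^Suc (Suc k) = 4*P" using pk unfolding P_def by auto
      have "f (2 ^ Suc k + j) = f (2 * (2^k + i) + 1)" using ji by simp
      also have "\<dots> = f (2^k + i + 1) + f (2^k + i) + 1" by (rule f_odd) (simp add: Suc_le_eq)
      finally have L: "f (2 ^ Suc k + j) = f (2^k + (i + 1)) + f (2^k + i) + 1" by simp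
      have "2 ^ Suc (Suc k) - j = 2 * (2^Suc k - i - 1) + 1" using ji i P unfolding P_def[symmetric] P by linarith
      then have "f (2 ^ Suc (Suc k) - j) = f (2 * (2^Suc k - i - 1) + 1)" by simp
      also have "\<dots> = f (2^Suc k - i - 1 + 1) + f (2^Suc k - i - 1) + 1"
        by (rule f_odd) (use i P in \<open>unfold P_def[symmetric] P, linarith\<close>)
      also have "2^Suc k - i - 1 + 1 = 2^Suc k - (i::nat)" using i P unfolding P_def[symmetric] P by linarith
      finally have R: "f (2 ^ Suc (Suc k) - j) = f (2^Suc k - i) + f (2^Suc k - (i+1)) + 1" by simp
      have A: "f (2^k + (i + 1)) = f (2^Suc k - (i+1))"
      proof (cases "i + 1 = 2^k")
        case True
        then have "2^k + (i+1) = 2^Suc k" "2^Suc k - (i+1) = (2::nat)^k" by simp_all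
        then show ?thesis using f_pow2 by metis
      next
        case False
        then have "1 \<le> i+1 \<and> i+1 \<le> 2^k - 1" using i P unfolding P_def[symmetric] by linarith
        then show ?thesis using Suc.IH by blast
      qed
      have B: "f (2^k + i) = f (2^Suc k - i)"
      proof (cases "i = 0")
        case True
        then show ?thesis using f_pow2[of k] f_pow2[of "Suc k"] by simp
      next
        case False
        then show ?thesis using Suc i by simp
      qed
      show ?thesis using L R A B by simp
    qed
  qed
qed

theorem proposition1:
  shows "(\<forall>k::nat. min_colless (2^k + 1) = k)
    \<and> (\<forall>k::nat. k \<ge> 1 \<longrightarrow> min_colless (2^k - 1) = k - 1)
    \<and> (\<forall>k::nat. \<forall>j::nat. k \<ge> 1 \<and> 1 \<le> j \<and> j \<le> 2^(k-1) - 1 \<longrightarrow>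
          min_colless (2^(k-1) + j) = min_colless (2^k - j))"
proof (intro conjI allI impI)
  fix k :: nat
  show "min_colless (2^k + 1) = k" using min_colless_f[of "2^k+1"] f1 by simp
next
  fix k :: nat assume k: "k \<ge> 1"
  have "(2::nat)^k \<ge> 2" proof -
    have "(2::nat)^1 \<le> 2^k" using k by (rule power_increasing) simp
    then show ?thesis by simp
  qed
  then show "min_colless (2^k - 1) = k - 1" using min_colless_f[of "2^k-1"] f2[OF k] by simp
next
  fix k j :: nat assume a: "k \<ge> 1 \<and> 1 \<le> j \<and> j \<le> 2^(k-1) - 1"
  then obtain m where m: "k = Suc m" by (cases k) auto
  have j: "1 \<le> j \<and> j \<le> 2^m - 1" using a m by simp
  have "f (2^m + j) = f (2^Suc m - j)" using f3[of m] j by blast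
  moreover have "2^Suc m - j \<ge> 1"
  proof -
    have "(2::nat)^m > 0" by simp
    then show ?thesis using j by (simp only: power_Suc) linarith
  qed
  ultimately show "min_colless (2^(k-1) + j) = min_colless (2^k - j)"
    using min_colless_f[of "2^m+j"] min_colless_f[of "2^Suc m - j"] m by simp
qed

end
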